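(* There is a constant $C>0$ such that for all integers $n\ge 2$, $D\ge 1$ and $k$ with $0<k\le D$, there exist a deterministic distributed algorithm and, for every graph $G$ of size $n$ and diameter $D$, an advice assignment of size at most $C\,(1+(\log n)/k)$, under which the algorithm accomplishes labeled topology recognition in $G$ within time $D+k$.
   Context: Graphs are finite, simple, undirected, connected, with no node labels; at each node of degree $d$ the incident edges carry distinct port numbers $0,\dots,d-1$ (no coherence between endpoints). Isomorphism of such graphs is a bijection of nodes preserving edges and port numbers at both endpoints. Size = number of nodes; $\log$ is base 2. Communication model (LOCAL): synchronous rounds, all nodes start simultaneously; in each round every node may send arbitrary messages to all neighbours, receives their messages (knowing the arrival port), and performs arbitrary local computation. Initially a node knows only its degree and its advice. Advice: an oracle knowing the graph assigns each node a binary string; the size of advice is the maximum string length. All nodes run the same deterministic algorithm. Labeled topology recognition: all nodes output the same port-labeled graph $H$ with distinct node labels, and each node outputs its own label, such that there is an isomorphism from $G$ to $H$ mapping every node to the node of $H$ carrying the label it output. Time is the number of rounds until all nodes have output. *)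

theory Defs
  imports Complex_Main
begin

text \<open>A port-labeled graph is given by a finite node set V, a degree function deg and
  a neighbour function nb: for a node v and a port p < deg v, nb v p is the node
  reached through port p at v.  Simple (no loops, no multi-edges) and undirected.\<close>

type_synonym pgraph = "nat set \<times> (nat \<Rightarrow> nat) \<times> (nat \<Rightarrow> nat \<Rightarrow> nat)"

definition port_graph :: "nat set \<Rightarrow> (nat \<Rightarrow> nat) \<Rightarrow> (nat \<Rightarrow> nat \<Rightarrow> nat) \<Rightarrow> bool" where
  "port_graph V deg nb \<longleftrightarrow> finite V \<and>
     (\<forall>v\<in>V. \<forall>p<deg v. nb v p \<in> V \<and> nb v p \<noteq> v \<and>
                        (\<exists>q<deg (nb v p). nb (nb v p) q = v)) \<and>
     (\<forall>v\<in>V. inj_on (nb v) {..<deg v})"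

definition pg_adj :: "nat set \<Rightarrow> (nat \<Rightarrow> nat) \<Rightarrow> (nat \<Rightarrow> nat \<Rightarrow> nat) \<Rightarrow> nat \<Rightarrow> nat \<Rightarrow> bool" where
  "pg_adj V deg nb u v \<longleftrightarrow> u \<in> V \<and> (\<exists>p<deg u. nb u p = v)"

definition pg_path_le :: "nat set \<Rightarrow> (nat \<Rightarrow> nat) \<Rightarrow> (nat \<Rightarrow> nat \<Rightarrow> nat) \<Rightarrow> nat \<Rightarrow> nat \<Rightarrow> nat \<Rightarrow> bool" where
  "pg_path_le V deg nb u v t \<longleftrightarrow> (\<exists>xs. xs \<noteq> [] \<and> hd xs = u \<and> last xs = v \<and> set xs \<subseteq> V \<and>
      length xs \<le> Suc t \<and> (\<forall>i. Suc i < length xs \<longrightarrow> pg_adj V deg nb (xs ! i) (xs ! Suc i)))"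

definition pg_connected :: "nat set \<Rightarrow> (nat \<Rightarrow> nat) \<Rightarrow> (nat \<Rightarrow> nat \<Rightarrow> nat) \<Rightarrow> bool" where
  "pg_connected V deg nb \<longleftrightarrow> (\<forall>u\<in>V. \<forall>v\<in>V. \<exists>t. pg_path_le V deg nb u v t)"

definition pg_dist :: "nat set \<Rightarrow> (nat \<Rightarrow> nat) \<Rightarrow> (nat \<Rightarrow> nat \<Rightarrow> nat) \<Rightarrow> nat \<Rightarrow> nat \<Rightarrow> nat" where
  "pg_dist V deg nb u v = (LEAST t. pg_path_le V deg nb u v t)"

definition pg_diam :: "nat set \<Rightarrow> (nat \<Rightarrow> nat) \<Rightarrow> (nat \<Rightarrow> nat \<Rightarrow> nat) \<Rightarrow> nat" where
  "pg_diam V deg nb = Max {pg_dist V deg nb u v | u v. u \<in> V \<and> v \<in> V}"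

definition pg_iso :: "nat set \<Rightarrow> (nat \<Rightarrow> nat) \<Rightarrow> (nat \<Rightarrow> nat \<Rightarrow> nat) \<Rightarrow> pgraph \<Rightarrow> (nat \<Rightarrow> nat) \<Rightarrow> bool" where
  "pg_iso V deg nb H f \<longleftrightarrow> (case H of (W, deg', nb') \<Rightarrow>
      bij_betw f V W \<and> (\<forall>v\<in>V. deg' (f v) = deg v \<and> (\<forall>p<deg v. nb' (f v) p = f (nb v p))))"

text \<open>Two outputs describe the same port-labeled graph (ignoring junk values outside the node set).\<close>
definition pg_same :: "pgraph \<Rightarrow> pgraph \<Rightarrow> bool" where
  "pg_same H H' \<longleftrightarrow> (case H of (W, d, b) \<Rightarrow> case H' of (W', d', b') \<Rightarrow>
      W = W' \<and> (\<forall>v\<in>W. d v = d' v \<and> (\<forall>p<d v. b v p = b' v p)))"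

text \<open>A deterministic algorithm (the same at all nodes): initial state from degree and
  advice; the message sent on each port as a function of the state; state transition
  from the current state and the list of received messages indexed by arrival port;
  an optional output (graph H, own label).  States and messages are natural numbers
  (a countable universe suffices to encode arbitrary finite information).\<close>

record algorithm =
  init :: "nat \<Rightarrow> bool list \<Rightarrow> nat"
  send :: "nat \<Rightarrow> nat \<Rightarrow> nat"
  trans :: "nat \<Rightarrow> nat list \<Rightarrow> nat"
  outp :: "nat \<Rightarrow> (pgraph \<times> nat) option"

definition back_port :: "(nat \<Rightarrow> nat) \<Rightarrow> (nat \<Rightarrow> nat \<Rightarrow> nat) \<Rightarrow> nat \<Rightarrow> nat \<Rightarrow> nat" where
  "back_port deg nb v p = (THE q. q < deg (nb v p) \<and> nb (nb v p) q = v)"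

fun run :: "algorithm \<Rightarrow> (nat \<Rightarrow> nat) \<Rightarrow> (nat \<Rightarrow> nat \<Rightarrow> nat) \<Rightarrow> (nat \<Rightarrow> bool list) \<Rightarrow> nat \<Rightarrow> nat \<Rightarrow> nat" where
  "run A deg nb adv 0 v = init A (deg v) (adv v)"
| "run A deg nb adv (Suc t) v = trans A (run A deg nb adv t v)
     (map (\<lambda>p. send A (run A deg nb adv t (nb v p)) (back_port deg nb v p)) [0..<deg v])"

definition out_time :: "algorithm \<Rightarrow> (nat \<Rightarrow> nat) \<Rightarrow> (nat \<Rightarrow> nat \<Rightarrow> nat) \<Rightarrow> (nat \<Rightarrow> bool list) \<Rightarrow> nat \<Rightarrow> nat" where
  "out_time A deg nb adv v = (LEAST t. outp A (run A deg nb adv t v) \<noteq> None)"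

definition final_out :: "algorithm \<Rightarrow> (nat \<Rightarrow> nat) \<Rightarrow> (nat \<Rightarrow> nat \<Rightarrow> nat) \<Rightarrow> (nat \<Rightarrow> bool list) \<Rightarrow> nat \<Rightarrow> pgraph \<times> nat" where
  "final_out A deg nb adv v = the (outp A (run A deg nb adv (out_time A deg nb adv v) v))"

definition solves_ltr_within :: "algorithm \<Rightarrow> nat set \<Rightarrow> (nat \<Rightarrow> nat) \<Rightarrow> (nat \<Rightarrow> nat \<Rightarrow> nat) \<Rightarrow> (nat \<Rightarrow> bool list) \<Rightarrow> nat \<Rightarrow> bool" where
  "solves_ltr_within A V deg nb adv T \<longleftrightarrow>
     (\<forall>v\<in>V. \<exists>t\<le>T. outp A (run A deg nb adv t v) \<noteq> None) \<and>
     (\<exists>H f. (\<forall>v\<in>V. pg_same (fst (final_out A deg nb adv v)) H) \<and>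
            pg_iso V deg nb H f \<and>
            (\<forall>v\<in>V. f v = snd (final_out A deg nb adv v)))"

end

theory Submission
  imports Defs "HOL-Library.Countable"
begin


fun walk :: "(nat \<Rightarrow> nat \<Rightarrow> nat) \<Rightarrow> nat \<Rightarrow> nat list \<Rightarrow> nat" where
  "walk nb u [] = u" | "walk nb u (p#ps) = walk nb (nb u p) ps"

fun gvalid :: "(nat \<Rightarrow> nat) \<Rightarrow> (nat \<Rightarrow> nat \<Rightarrow> nat) \<Rightarrow> nat \<Rightarrow> nat list \<Rightarrow> bool" where
  "gvalid deg nb u [] = True"
| "gvalid deg nb u (p#ps) = (p < deg u \<and> gvalid deg nb (nb u p) ps)"

lemma walk_append[simp]: "walk nb u (ps @ qs) = walk nb (walk nb u ps) qs"
  by (induction ps arbitrary: u) auto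

lemma gvalid_append[simp]: "gvalid deg nb u (ps @ qs) = (gvalid deg nb u ps \<and> gvalid deg nb (walk nb u ps) qs)"
  by (induction ps arbitrary: u) auto

locale pgr =
  fixes V :: "nat set" and deg :: "nat \<Rightarrow> nat" and nb :: "nat \<Rightarrow> nat \<Rightarrow> nat"
  assumes pg: "port_graph V deg nb" and conn: "pg_connected V deg nb"
begin

lemma finV: "finite V" using pg unfolding port_graph_def by auto

lemma nb_in: "v \<in> V \<Longrightarrow> p < deg v \<Longrightarrow> nb v p \<in> V"
  using pg unfolding port_graph_def by auto

lemma back_port_ok:
  assumes "v \<in> V" "p < deg v"
  shows "back_port deg nb v p < deg (nb v p) \<and> nb (nb v p) (back_port deg nb v p) = v"
proof -
  let ?w = "nb v p"
  have w: "?w \<in> V" using nb_in assms by auto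
  obtain q where q: "q < deg ?w" "nb ?w q = v" using pg assms unfolding port_graph_def by blast
  have inj: "inj_on (nb ?w) {..<deg ?w}" using pg w unfolding port_graph_def by auto
  have "\<exists>!q. q < deg ?w \<and> nb ?w q = v"
    using q inj by (metis inj_onD lessThan_iff)
  then show ?thesis unfolding back_port_def by (rule theI')
qed

lemma walk_in: "u \<in> V \<Longrightarrow> gvalid deg nb u ps \<Longrightarrow> walk nb u ps \<in> V"
  by (induction ps arbitrary: u) (auto simp: nb_in)

lemma path_to_walk_aux:
  "xs \<noteq> [] \<Longrightarrow> (\<forall>i. Suc i < length xs \<longrightarrow> pg_adj V deg nb (xs ! i) (xs ! Suc i)) \<Longrightarrow>
   \<exists>ps. gvalid deg nb (hd xs) ps \<and> walk nb (hd xs) ps = last xs \<and> length ps = length xs - 1"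
proof (induction xs)
  case Nil then show ?case by simp
next
  case (Cons a xs)
  show ?case
  proof (cases "xs = []")
    case True then show ?thesis by (intro exI[of _ "[]"]) auto
  next
    case False
    have adj: "pg_adj V deg nb a (hd xs)" using Cons.prems(2)[rule_format, of 0] False
      by (simp add: hd_conv_nth)
    then obtain p where p: "p < deg a" "nb a p = hd xs" unfolding pg_adj_def by auto
    have "\<forall>i. Suc i < length xs \<longrightarrow> pg_adj V deg nb (xs ! i) (xs ! Suc i)"
      using Cons.prems(2) by (metis Suc_less_eq length_Cons nth_Cons_Suc)
    then obtain ps where ps: "gvalid deg nb (hd xs) ps" "walk nb (hd xs) ps = last xs" "length ps = length xs - 1"
      using Cons.IH False by blast
    show ?thesis using p ps False by (intro exI[of _ "p#ps"]) auto
  qed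
qed

lemma path_to_walk:
  assumes "pg_path_le V deg nb u v t"
  shows "\<exists>ps. gvalid deg nb u ps \<and> walk nb u ps = v \<and> length ps \<le> t"
proof -
  obtain xs where xs: "xs \<noteq> []" "hd xs = u" "last xs = v" "length xs \<le> Suc t"
    "\<forall>i. Suc i < length xs \<longrightarrow> pg_adj V deg nb (xs ! i) (xs ! Suc i)"
    using assms unfolding pg_path_le_def by blast
  from path_to_walk_aux[OF xs(1) xs(5)] xs show ?thesis by fastforce
qed

lemma walk_to_path:
  "u \<in> V \<Longrightarrow> gvalid deg nb u ps \<Longrightarrow> pg_path_le V deg nb u (walk nb u ps) (length ps)"
proof (induction ps arbitrary: u)
  case Nil then show ?case unfolding pg_path_le_def by (intro exI[of _ "[u]"]) auto
next
  case (Cons p ps)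
  have w: "nb u p \<in> V" "p < deg u" using Cons.prems nb_in by auto
  then obtain xs where xs: "xs \<noteq> []" "hd xs = nb u p" "last xs = walk nb (nb u p) ps" "set xs \<subseteq> V"
    "length xs \<le> Suc (length ps)" "\<forall>i. Suc i < length xs \<longrightarrow> pg_adj V deg nb (xs ! i) (xs ! Suc i)"
    using Cons.IH[of "nb u p"] Cons.prems unfolding pg_path_le_def by auto
  have "\<forall>i. Suc i < length (u#xs) \<longrightarrow> pg_adj V deg nb ((u#xs) ! i) ((u#xs) ! Suc i)"
  proof (intro allI impI)
    fix i assume "Suc i < length (u#xs)"
    show "pg_adj V deg nb ((u#xs) ! i) ((u#xs) ! Suc i)"
    proof (cases i)
      case 0 then show ?thesis using xs w Cons.prems unfolding pg_adj_def
        by (auto simp: hd_conv_nth)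
    next
      case (Suc j) then show ?thesis using xs(6) \<open>Suc i < length (u#xs)\<close> by auto
    qed
  qed
  then show ?case unfolding pg_path_le_def using xs Cons.prems
    by (intro exI[of _ "u#xs"]) auto
qed

abbreviation gd where "gd u v \<equiv> pg_dist V deg nb u v"

lemma dist_le: "u \<in> V \<Longrightarrow> gvalid deg nb u ps \<Longrightarrow> gd u (walk nb u ps) \<le> length ps"
  unfolding pg_dist_def by (rule Least_le) (rule walk_to_path)

lemma dist_walk:
  assumes "u \<in> V" "v \<in> V"
  shows "\<exists>ps. gvalid deg nb u ps \<and> walk nb u ps = v \<and> length ps = gd u v"
proof -
  obtain t where "pg_path_le V deg nb u v t" using conn assms unfolding pg_connected_def by blast
  then have "pg_path_le V deg nb u v (gd u v)" unfolding pg_dist_def by (rule LeastI)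
  then obtain ps where ps: "gvalid deg nb u ps" "walk nb u ps = v" "length ps \<le> gd u v"
    using path_to_walk by blast
  have "gd u v \<le> length ps" using dist_le[OF assms(1) ps(1)] ps(2) by simp
  then show ?thesis using ps by (intro exI[of _ ps]) auto
qed

lemma dist_tri:
  assumes "a \<in> V" "b \<in> V" "c \<in> V"
  shows "gd a c \<le> gd a b + gd b c"
proof -
  obtain ps where ps: "gvalid deg nb a ps" "walk nb a ps = b" "length ps = gd a b" using dist_walk assms by blast
  obtain qs where qs: "gvalid deg nb b qs" "walk nb b qs = c" "length qs = gd b c" using dist_walk assms by blast
  have "gd a (walk nb a (ps @ qs)) \<le> length (ps @ qs)" using dist_le[OF assms(1), of "ps @ qs"] ps qs by simp
  then show ?thesis using ps qs by simp
qed

lemma rev_walk: "u \<in> V \<Longrightarrow> gvalid deg nb u ps \<Longrightarrow>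
   \<exists>qs. gvalid deg nb (walk nb u ps) qs \<and> walk nb (walk nb u ps) qs = u \<and> length qs = length ps"
proof (induction ps arbitrary: u)
  case Nil then show ?case by (intro exI[of _ "[]"]) auto
next
  case (Cons p ps)
  have w: "nb u p \<in> V" "p < deg u" using Cons.prems nb_in by auto
  obtain qs where qs: "gvalid deg nb (walk nb (nb u p) ps) qs" "walk nb (walk nb (nb u p) ps) qs = nb u p"
     "length qs = length ps" using Cons.IH[OF w(1)] Cons.prems by auto
  have b: "back_port deg nb u p < deg (nb u p)" "nb (nb u p) (back_port deg nb u p) = u"
    using back_port_ok Cons.prems w by auto
  show ?case using qs b by (intro exI[of _ "qs @ [back_port deg nb u p]"]) auto
qed

lemma dist_sym_le: assumes "a \<in> V" "b \<in> V" shows "gd b a \<le> gd a b"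
proof -
  obtain ps where ps: "gvalid deg nb a ps" "walk nb a ps = b" "length ps = gd a b" using dist_walk assms by blast
  obtain qs where "gvalid deg nb b qs" "walk nb b qs = a" "length qs = length ps"
    using rev_walk[OF assms(1) ps(1)] ps(2) by auto
  then show ?thesis using dist_le[OF assms(2), of qs] ps by simp
qed

lemma dist_sym: "a \<in> V \<Longrightarrow> b \<in> V \<Longrightarrow> gd a b = gd b a"
  using dist_sym_le by (simp add: order_antisym)

lemma dist_self: "a \<in> V \<Longrightarrow> gd a a = 0"
  using dist_le[of a "[]"] by simp

lemma dist_le_diam: "a \<in> V \<Longrightarrow> b \<in> V \<Longrightarrow> gd a b \<le> pg_diam V deg nb"
  unfolding pg_diam_def
  by (rule Max_ge) (auto intro: finite_subset[of _ "(\<lambda>(u,v). gd u v) ` (V \<times> V)"] simp: finV)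

lemma diam_att: "V \<noteq> {} \<Longrightarrow> \<exists>a\<in>V. \<exists>b\<in>V. gd a b = pg_diam V deg nb"
proof -
  assume "V \<noteq> {}"
  let ?S = "{gd u v | u v. u \<in> V \<and> v \<in> V}"
  have "?S \<subseteq> (\<lambda>(u,v). gd u v) ` (V \<times> V)" by auto
  then have "finite ?S" using finV by (meson finite_SigmaI finite_imageI finite_subset)
  moreover have "?S \<noteq> {}" using \<open>V \<noteq> {}\<close> by auto
  ultimately have "Max ?S \<in> ?S" by (rule Max_in)
  then obtain u v where "u \<in> V" "v \<in> V" "Max ?S = gd u v" by blast
  then show ?thesis unfolding pg_diam_def by (intro bexI[of _ u] bexI[of _ v]) auto
qed

end



definition mkv :: "bool list \<Rightarrow> nat \<Rightarrow> (nat \<times> nat) list \<Rightarrow> nat" where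
  "mkv a d cs = to_nat (a, d, cs)"
definition vtup :: "nat \<Rightarrow> bool list \<times> nat \<times> (nat \<times> nat) list" where
  "vtup w = from_nat w"
definition va where "va w = fst (vtup w)"
definition vd where "vd w = fst (snd (vtup w))"
definition vc where "vc w = snd (snd (vtup w))"

lemma vtup_mkv[simp]: "vtup (mkv a d cs) = (a, d, cs)"
  unfolding vtup_def mkv_def by simp
lemma va_mkv[simp]: "va (mkv a d cs) = a" by (simp add: va_def)
lemma vd_mkv[simp]: "vd (mkv a d cs) = d" by (simp add: vd_def)
lemma vc_mkv[simp]: "vc (mkv a d cs) = cs" by (simp add: vc_def)
lemma mkv_eq[simp]: "mkv a d cs = mkv a' d' cs' \<longleftrightarrow> a = a' \<and> d = d' \<and> cs = cs'"
  unfolding mkv_def by simp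

fun vw :: "(nat \<Rightarrow> nat) \<Rightarrow> (nat \<Rightarrow> nat \<Rightarrow> nat) \<Rightarrow> (nat \<Rightarrow> bool list) \<Rightarrow> nat \<Rightarrow> nat \<Rightarrow> nat" where
  "vw deg nb adv 0 u = mkv (adv u) (deg u) []"
| "vw deg nb adv (Suc t) u = mkv (adv u) (deg u)
      (map (\<lambda>p. (back_port deg nb u p, vw deg nb adv t (nb u p))) [0..<deg u])"

lemma va_vw[simp]: "va (vw deg nb adv t u) = adv u" by (cases t) auto
lemma vd_vw[simp]: "vd (vw deg nb adv t u) = deg u" by (cases t) auto

fun trunc :: "nat \<Rightarrow> nat \<Rightarrow> nat" where
  "trunc 0 w = mkv (va w) (vd w) []"
| "trunc (Suc j) w = mkv (va w) (vd w) (map (\<lambda>x. (fst x, trunc j (snd x))) (vc w))"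

fun sub :: "nat list \<Rightarrow> nat \<Rightarrow> nat" where
  "sub [] w = w" | "sub (p#ps) w = sub ps (snd (vc w ! p))"

fun vvalid :: "nat list \<Rightarrow> nat \<Rightarrow> bool" where
  "vvalid [] w = True" | "vvalid (p#ps) w = (p < length (vc w) \<and> vvalid ps (snd (vc w ! p)))"

lemma trunc_vw: "j \<le> t \<Longrightarrow> trunc j (vw deg nb adv t u) = vw deg nb adv j u"
proof (induction j arbitrary: t u)
  case 0 then show ?case by simp
next
  case (Suc j)
  then obtain t' where t: "t = Suc t'" "j \<le> t'" by (cases t) auto
  show ?case using t Suc.IH by (simp add: o_def)
qed

lemma sub_vw: "length ps \<le> t \<Longrightarrow>
  vvalid ps (vw deg nb adv t u) = gvalid deg nb u ps \<and>
  (gvalid deg nb u ps \<longrightarrow> sub ps (vw deg nb adv t u) = vw deg nb adv (t - length ps) (walk nb u ps))"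
proof (induction ps arbitrary: t u)
  case Nil then show ?case by simp
next
  case (Cons p ps)
  then obtain t' where t: "t = Suc t'" "length ps \<le> t'" by (cases t) auto
  show ?case
  proof (cases "p < deg u")
    case True
    then show ?thesis using Cons.IH[OF t(2), of "nb u p"] t by simp
  next
    case False then show ?thesis using t by simp
  qed
qed

definition mkst :: "nat \<Rightarrow> nat \<Rightarrow> nat" where "mkst t w = to_nat (t, w)"
definition sta :: "nat \<Rightarrow> nat" where "sta s = fst (from_nat s :: nat \<times> nat)"
definition stv :: "nat \<Rightarrow> nat" where "stv s = snd (from_nat s :: nat \<times> nat)"
lemma sta_mkst[simp]: "sta (mkst t w) = t" by (simp add: sta_def mkst_def)
lemma stv_mkst[simp]: "stv (mkst t w) = w" by (simp add: stv_def mkst_def)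

definition decode :: "nat \<Rightarrow> nat \<Rightarrow> nat \<Rightarrow> pgraph \<times> nat" where
  "decode D K W = (let P = {ps. vvalid ps W \<and> length ps \<le> D} in
     (((\<lambda>ps. trunc K (sub ps W)) ` P, vd,
       (\<lambda>x p. SOME y. \<exists>ps\<in>P. trunc K (sub ps W) = x \<and> y = trunc K (snd (vc (sub ps W) ! p)))),
      trunc K W))"

definition alg :: "nat \<Rightarrow> nat \<Rightarrow> nat \<Rightarrow> algorithm" where
  "alg T D K = \<lparr> init = (\<lambda>d a. mkst 0 (mkv a d [])),
     send = (\<lambda>s q. to_nat (q, stv s)),
     trans = (\<lambda>s ms. mkst (Suc (sta s)) (mkv (va (stv s)) (vd (stv s)) (map (\<lambda>m. from_nat m :: nat \<times> nat) ms))),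
     outp = (\<lambda>s. if sta s = T then Some (decode D K (stv s)) else None) \<rparr>"

lemma run_alg: "run (alg T D K) deg nb adv t v = mkst t (vw deg nb adv t v)"
  by (induction t arbitrary: v) (simp_all add: alg_def o_def)

lemma outp_mkst: "outp (alg T D K) (mkst t w) \<noteq> None \<longleftrightarrow> t = T"
  by (simp add: alg_def del: not_None_eq)

lemma out_time_alg: "out_time (alg T D K) deg nb adv v = T"
  unfolding out_time_def run_alg outp_mkst by (rule Least_equality) auto

lemma final_out_alg: "final_out (alg T D K) deg nb adv v = decode D K (vw deg nb adv T v)"
  unfolding final_out_def out_time_alg run_alg by (simp add: alg_def)

lemma outp_alg: "outp (alg T D K) (run (alg T D K) deg nb adv T v) \<noteq> None"
  unfolding run_alg by (simp add: alg_def)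

context pgr
begin

definition H0 :: "(nat \<Rightarrow> bool list) \<Rightarrow> nat \<Rightarrow> pgraph" where
  "H0 adv K = (vw deg nb adv K ` V, vd,
     \<lambda>x p. vw deg nb adv K (nb (SOME u. u \<in> V \<and> vw deg nb adv K u = x) p))"

lemma H0_iso:
  assumes inj: "inj_on (vw deg nb adv K) V"
  shows "pg_iso V deg nb (H0 adv K) (vw deg nb adv K)"
proof -
  have "(SOME u. u \<in> V \<and> vw deg nb adv K u = vw deg nb adv K v) = v" if "v \<in> V" for v
    using inj that by (intro some_equality) (auto dest: inj_onD)
  then show ?thesis unfolding pg_iso_def H0_def using inj
    by (auto simp: bij_betw_def)
qed

lemma decode_ok:
  assumes inj: "inj_on (vw deg nb adv K) V" and v: "v \<in> V" and T: "T = D + Suc K"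
    and Dd: "pg_diam V deg nb \<le> D"
  shows "pg_same (fst (decode D K (vw deg nb adv T v))) (H0 adv K)"
    and "snd (decode D K (vw deg nb adv T v)) = vw deg nb adv K v"
proof -
  let ?W = "vw deg nb adv T v"
  let ?P = "{ps. vvalid ps ?W \<and> length ps \<le> D}"
  let ?f = "vw deg nb adv K"
  have TD: "D \<le> T" using T by simp
  have A: "ps \<in> ?P \<longleftrightarrow> gvalid deg nb v ps \<and> length ps \<le> D" for ps
  proof -
    have "length ps \<le> D \<Longrightarrow> length ps \<le> T" using TD by simp
    then show ?thesis using sub_vw[of ps T deg nb adv v] by auto
  qed
  have B: "trunc K (sub ps ?W) = ?f (walk nb v ps)" if "ps \<in> ?P" for ps
  proof -
    have g: "gvalid deg nb v ps" "length ps \<le> D" using that A by auto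
    have l: "length ps \<le> T" "K \<le> T - length ps" using g(2) T by auto
    have "sub ps ?W = vw deg nb adv (T - length ps) (walk nb v ps)"
      using sub_vw[OF l(1), of deg nb adv v] g by blast
    then show ?thesis using trunc_vw[OF l(2)] by simp
  qed
  have C: "trunc K (snd (vc (sub ps ?W) ! p)) = ?f (nb (walk nb v ps) p)"
    if "ps \<in> ?P" "p < deg (walk nb v ps)" for ps p
  proof -
    have g: "gvalid deg nb v ps" "length ps \<le> D" using that A by auto
    have l: "length ps \<le> T" "K \<le> T - length ps - 1" "T - length ps = Suc (T - length ps - 1)"
      using g(2) T by auto
    have "sub ps ?W = vw deg nb adv (T - length ps) (walk nb v ps)"
      using sub_vw[OF l(1), of deg nb adv v] g by blast
    also have "\<dots> = vw deg nb adv (Suc (T - length ps - 1)) (walk nb v ps)" using l(3) by simp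
    finally have e: "sub ps ?W = vw deg nb adv (Suc (T - length ps - 1)) (walk nb v ps)" .
    show ?thesis unfolding e using that(2) trunc_vw[OF l(2)] by simp
  qed
  have reach: "\<exists>ps\<in>?P. walk nb v ps = u" if uV: "u \<in> V" for u
  proof -
    obtain ps where "gvalid deg nb v ps" "walk nb v ps = u" "length ps = gd v u"
      using dist_walk[OF v uV] by blast
    moreover have "gd v u \<le> D" using dist_le_diam[OF v uV] Dd by simp
    ultimately have "ps \<in> ?P" "walk nb v ps = u" using A by simp_all
    then show ?thesis by blast
  qed
  have Wset: "(\<lambda>ps. trunc K (sub ps ?W)) ` ?P = ?f ` V"
  proof
    show "(\<lambda>ps. trunc K (sub ps ?W)) ` ?P \<subseteq> ?f ` V"
    proof
      fix x assume "x \<in> (\<lambda>ps. trunc K (sub ps ?W)) ` ?P"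
      then obtain ps where ps: "ps \<in> ?P" "x = trunc K (sub ps ?W)" by blast
      have "walk nb v ps \<in> V" using ps(1) A walk_in[OF v] by blast
      moreover have "x = ?f (walk nb v ps)" using ps B by simp
      ultimately show "x \<in> ?f ` V" by blast
    qed
    show "?f ` V \<subseteq> (\<lambda>ps. trunc K (sub ps ?W)) ` ?P"
    proof
      fix x assume "x \<in> ?f ` V"
      then obtain u where u: "u \<in> V" "x = ?f u" by auto
      obtain ps where "ps \<in> ?P" "walk nb v ps = u" using reach u by blast
      moreover have "x = trunc K (sub ps ?W)" using B[OF \<open>ps \<in> ?P\<close>] u \<open>walk nb v ps = u\<close> by simp
      ultimately show "x \<in> (\<lambda>ps. trunc K (sub ps ?W)) ` ?P" by blast
    qed
  qed
  have Nb: "(SOME y. \<exists>ps\<in>?P. trunc K (sub ps ?W) = ?f u \<and> y = trunc K (snd (vc (sub ps ?W) ! p)))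
        = ?f (nb (SOME u'. u' \<in> V \<and> ?f u' = ?f u) p)" if u: "u \<in> V" "p < deg u" for u p
  proof -
    have s: "(SOME u'. u' \<in> V \<and> ?f u' = ?f u) = u"
      using inj u by (intro some_equality) (auto dest: inj_onD)
    have "(SOME y. \<exists>ps\<in>?P. trunc K (sub ps ?W) = ?f u \<and> y = trunc K (snd (vc (sub ps ?W) ! p)))
        = ?f (nb u p)"
    proof (rule some_equality)
      obtain ps where ps: "ps \<in> ?P" "walk nb v ps = u" using reach u by blast
      show "\<exists>ps\<in>?P. trunc K (sub ps ?W) = ?f u \<and> ?f (nb u p) = trunc K (snd (vc (sub ps ?W) ! p))"
        using ps B C u by (intro bexI[of _ ps]) auto
    next
      fix y assume "\<exists>ps\<in>?P. trunc K (sub ps ?W) = ?f u \<and> y = trunc K (snd (vc (sub ps ?W) ! p))"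
      then obtain ps where ps: "ps \<in> ?P" "trunc K (sub ps ?W) = ?f u"
        "y = trunc K (snd (vc (sub ps ?W) ! p))" by blast
      have w: "walk nb v ps \<in> V" using ps(1) A walk_in[OF v] by blast
      have "walk nb v ps = u" using ps(2) B[OF ps(1)] inj w u by (auto dest: inj_onD)
      then show "y = ?f (nb u p)" using ps C u by auto
    qed
    then show ?thesis using s by simp
  qed
  show "pg_same (fst (decode D K ?W)) (H0 adv K)"
  proof -
    have "\<forall>x\<in>?f ` V. \<forall>p<vd x. (SOME y. \<exists>ps\<in>?P. trunc K (sub ps ?W) = x \<and> y = trunc K (snd (vc (sub ps ?W) ! p)))
        = ?f (nb (SOME u'. u' \<in> V \<and> ?f u' = x) p)"
    proof (intro ballI allI impI)
      fix x p assume x: "x \<in> ?f ` V" and p: "p < vd x"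
      then obtain u where u: "u \<in> V" "x = ?f u" by blast
      have "p < deg u" using p u by simp
      then show "(SOME y. \<exists>ps\<in>?P. trunc K (sub ps ?W) = x \<and> y = trunc K (snd (vc (sub ps ?W) ! p)))
        = ?f (nb (SOME u'. u' \<in> V \<and> ?f u' = x) p)" using Nb[OF u(1)] u(2) by simp
    qed
    then show ?thesis unfolding pg_same_def decode_def H0_def Let_def fst_conv prod.case
      using Wset by simp
  qed
  show "snd (decode D K ?W) = ?f v"
  proof -
    have "K \<le> T" using T by simp
    then show ?thesis unfolding decode_def Let_def using trunc_vw[of K T] by simp
  qed
qed

end



context pgr begin

lemma geodesic:
  assumes c: "c \<in> V" and w: "w \<in> V"
  shows "\<exists>ps. gvalid deg nb c ps \<and> length ps = gd c w \<and>
     (\<forall>i\<le>length ps. gd c (walk nb c (take i ps)) = i)"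
proof -
  obtain ps where ps: "gvalid deg nb c ps" "walk nb c ps = w" "length ps = gd c w"
    using dist_walk[OF c w] by blast
  have "gd c (walk nb c (take i ps)) = i" if i: "i \<le> length ps" for i
  proof -
    have gt: "gvalid deg nb c (take i ps)" "gvalid deg nb (walk nb c (take i ps)) (drop i ps)"
      using ps(1) gvalid_append[of deg nb c "take i ps" "drop i ps"] by simp_all
    let ?x = "walk nb c (take i ps)"
    have x: "?x \<in> V" using walk_in[OF c gt(1)] .
    have le: "gd c ?x \<le> i" using dist_le[OF c gt(1)] i by simp
    have "gd ?x w \<le> length ps - i"
      using dist_le[OF x gt(2)] ps(2) walk_append[of nb c "take i ps" "drop i ps"] by simp
    moreover have "gd c w \<le> gd c ?x + gd ?x w" using dist_tri[OF c x w] .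
    ultimately show ?thesis using le ps(3) i by linarith
  qed
  then show ?thesis using ps by blast
qed

lemma centers_exist:
  "\<exists>S\<subseteq>V. (\<forall>a\<in>S. \<forall>b\<in>S. a \<noteq> b \<longrightarrow> 2*s < gd a b) \<and> (\<forall>u\<in>V. \<exists>c\<in>S. gd u c \<le> 2*s)"
proof -
  define F where "F = {S. S \<subseteq> V \<and> (\<forall>a\<in>S. \<forall>b\<in>S. a \<noteq> b \<longrightarrow> 2*s < gd a b)}"
  have "F \<subseteq> Pow V" unfolding F_def by blast
  then have fin: "finite F" using finV by (meson finite_Pow_iff finite_subset)
  have ne: "F \<noteq> {}" unfolding F_def by blast
  obtain S where S: "S \<in> F" and mx: "\<forall>T\<in>F. S \<le> T \<longrightarrow> S = T"
    using finite_has_maximal[OF fin ne] by blast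
  have SV: "S \<subseteq> V" and sep: "\<forall>a\<in>S. \<forall>b\<in>S. a \<noteq> b \<longrightarrow> 2*s < gd a b"
    using S unfolding F_def by blast+
  have "\<exists>c\<in>S. gd u c \<le> 2*s" if u: "u \<in> V" for u
  proof (rule ccontr)
    assume "\<not> ?thesis"
    then have far: "\<forall>c\<in>S. 2*s < gd u c" by auto
    have far2: "\<forall>c\<in>S. 2*s < gd c u"
    proof
      fix c assume c: "c \<in> S"
      then have "c \<in> V" using SV by blast
      then show "2*s < gd c u" using far c dist_sym[OF u] by metis
    qed
    have uS: "u \<notin> S" using far dist_self[OF u] by (metis less_nat_zero_code)
    have "\<forall>a\<in>insert u S. \<forall>b\<in>insert u S. a \<noteq> b \<longrightarrow> 2*s < gd a b"
    proof (intro ballI impI)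
      fix a b assume "a \<in> insert u S" "b \<in> insert u S" "a \<noteq> b"
      then show "2*s < gd a b" using far far2 sep by blast
    qed
    then have "insert u S \<in> F" using SV u unfolding F_def by blast
    moreover have "S \<le> insert u S" by blast
    ultimately have "S = insert u S" using mx by blast
    then show False using uS by blast
  qed
  then show ?thesis using SV sep by blast
qed

lemma vw_Suc_eq:
  assumes "vw deg nb adv (Suc t) u = vw deg nb adv (Suc t) u'" "p < deg u"
  shows "deg u = deg u' \<and> back_port deg nb u p = back_port deg nb u' p \<and>
         vw deg nb adv t (nb u p) = vw deg nb adv t (nb u' p)"
proof -
  have d: "deg u = deg u'" using assms(1) by simp
  have "\<forall>x\<in>{0..<deg u}. back_port deg nb u x = back_port deg nb u' x \<and>
        vw deg nb adv t (nb u x) = vw deg nb adv t (nb u' x)"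
    using assms(1) d by simp
  then show ?thesis using assms(2) d by simp
qed

lemma view_rev:
  "vw deg nb adv t u = vw deg nb adv t u' \<Longrightarrow> u \<in> V \<Longrightarrow> u' \<in> V \<Longrightarrow> gvalid deg nb u ps \<Longrightarrow>
   length ps \<le> t \<Longrightarrow> walk nb u ps = walk nb u' ps \<Longrightarrow> u = u'"
proof (induction ps arbitrary: t u u')
  case Nil then show ?case by simp
next
  case (Cons p ps)
  then obtain t' where t: "t = Suc t'" "length ps \<le> t'" by (cases t) auto
  have p: "p < deg u" using Cons.prems by simp
  have e: "deg u = deg u'" "back_port deg nb u p = back_port deg nb u' p"
     "vw deg nb adv t' (nb u p) = vw deg nb adv t' (nb u' p)"
    using vw_Suc_eq[of adv t' u u' p] Cons.prems(1) t p by auto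
  have "nb u p = nb u' p"
    using Cons.IH[OF e(3) nb_in[OF Cons.prems(2) p] nb_in[OF Cons.prems(3)] _ t(2)] Cons.prems p e(1) by simp
  then show ?case using back_port_ok[OF Cons.prems(2) p] back_port_ok[of u' p] Cons.prems(3) p e by metis
qed

lemma view_walk:
  assumes "vw deg nb adv t u = vw deg nb adv t u'" "gvalid deg nb u ps" "length ps \<le> t"
  shows "gvalid deg nb u' ps \<and>
    vw deg nb adv (t - length ps) (walk nb u ps) = vw deg nb adv (t - length ps) (walk nb u' ps)"
  using sub_vw[OF assms(3), of deg nb adv u] sub_vw[OF assms(3), of deg nb adv u'] assms by metis

lemma view_mono:
  "vw deg nb adv t u = vw deg nb adv t u' \<Longrightarrow> j \<le> t \<Longrightarrow> vw deg nb adv j u = vw deg nb adv j u'"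
  by (metis trunc_vw)

lemma view_adv: "vw deg nb adv t u = vw deg nb adv t u' \<Longrightarrow> adv u = adv u'"
  by (metis va_vw)

end

lemma chunks_eq:
  assumes "length xs = Suc s * m" "length ys = Suc s * m"
    "\<forall>i\<le>s. take m (drop (i*m) xs) = take m (drop (i*m) ys)"
  shows "xs = ys"
proof (rule nth_equalityI)
  show "length xs = length ys" using assms by simp
  fix j assume j: "j < length xs"
  then have m: "m > 0" using assms(1) by (cases m) auto
  define i where "i = j div m"
  define r where "r = j mod m"
  have jr: "i * m + r = j" unfolding i_def r_def by simp
  have "i < Suc s" unfolding i_def using j assms(1) by (simp add: less_mult_imp_div_less)
  then have i: "i \<le> s" by simp
  have r: "r < m" unfolding r_def using m by simp
  have le: "i * m \<le> length xs" "i * m \<le> length ys" using jr j assms by linarith+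
  have "take m (drop (i*m) xs) ! r = take m (drop (i*m) ys) ! r" using assms(3) i by simp
  moreover have "take m (drop (i*m) xs) ! r = xs ! j"
    using r le jr by (simp add: nth_drop)
  moreover have "take m (drop (i*m) ys) ! r = ys ! j"
    using r le jr by (simp add: nth_drop)
  ultimately show "xs ! j = ys ! j" by simp
qed




locale scheme = pgr +
  fixes s K m :: nat and S :: "nat set" and cp :: "nat \<Rightarrow> nat list" and idf :: "nat \<Rightarrow> bool list"
  assumes sK: "3*s \<le> K"
  and SV: "S \<subseteq> V" and sep: "\<forall>a\<in>S. \<forall>b\<in>S. a \<noteq> b \<longrightarrow> 2*s < gd a b"
  and cover: "\<forall>u\<in>V. \<exists>c\<in>S. gd u c \<le> 2*s"
  and cpv: "\<forall>c\<in>S. gvalid deg nb c (cp c) \<and> s \<le> length (cp c) \<and> (\<forall>i\<le>s. gd c (walk nb c (take i (cp c))) = i)"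
  and idinj: "inj_on idf V" and idlen: "\<forall>u\<in>V. length (idf u) = Suc s * m"
begin

definition pth where "pth c i = walk nb c (take i (cp c))"
definition hdr :: "nat \<Rightarrow> bool list" where "hdr i = [True, i = 0, i mod 3 = 1, i mod 3 = 2]"
definition chunk where "chunk c i = take m (drop (i*m) (idf c))"
definition marked where "marked w \<longleftrightarrow> (\<exists>c\<in>S. \<exists>i\<le>s. pth c i = w)"
definition owner where "owner w = (SOME ci. fst ci \<in> S \<and> snd ci \<le> s \<and> pth (fst ci) (snd ci) = w)"
definition adv where
  "adv w = (if marked w then hdr (snd (owner w)) @ chunk (fst (owner w)) (snd (owner w)) else [])"

lemma gvalid_take: "gvalid deg nb u ps \<Longrightarrow> gvalid deg nb u (take i ps)"
  using gvalid_append[of deg nb u "take i ps" "drop i ps"] by simp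

lemma pth_props:
  assumes "c \<in> S" "i \<le> s"
  shows "pth c i \<in> V \<and> gd c (pth c i) = i \<and> gvalid deg nb c (take i (cp c)) \<and> length (take i (cp c)) = i"
proof -
  have c: "c \<in> V" using assms SV by blast
  have g: "gvalid deg nb c (take i (cp c))" using cpv assms gvalid_take by blast
  moreover have "pth c i \<in> V" unfolding pth_def using walk_in[OF c g] .
  moreover have "gd c (pth c i) = i" unfolding pth_def using cpv assms by blast
  moreover have "length (take i (cp c)) = i" using cpv assms by auto
  ultimately show ?thesis by blast
qed

lemma pth0: "pth c 0 = c" unfolding pth_def by simp

lemma uniq:
  assumes "c \<in> S" "c' \<in> S" "i \<le> s" "i' \<le> s" "pth c i = pth c' i'"
  shows "c = c' \<and> i = i'"
proof -
  let ?w = "pth c i"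
  have cV: "c \<in> V" "c' \<in> V" using assms SV by auto
  have w: "?w \<in> V" "gd c ?w = i" "gd c' ?w = i'" using pth_props assms by metis+
  have "gd c c' \<le> gd c ?w + gd ?w c'" using dist_tri[OF cV(1) w(1) cV(2)] .
  also have "gd ?w c' = i'" using w dist_sym cV by metis
  finally have "gd c c' \<le> 2*s" using w assms by linarith
  then have "c = c'" using sep assms by (meson not_less)
  then show ?thesis using w by simp
qed

lemma adv_pth:
  assumes "c \<in> S" "i \<le> s"
  shows "adv (pth c i) = hdr i @ chunk c i"
proof -
  have mk: "marked (pth c i)" unfolding marked_def using assms by blast
  let ?P = "\<lambda>ci. fst ci \<in> S \<and> snd ci \<le> s \<and> pth (fst ci) (snd ci) = pth c i"
  have "?P (c, i)" using assms by simp
  then have "?P (owner (pth c i))" unfolding owner_def by (rule someI)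
  then have "owner (pth c i) = (c, i)" using uniq[OF assms(1) _ assms(2)] by (metis prod.collapse)
  then show ?thesis unfolding adv_def using mk by simp
qed

lemma adv_ne:
  assumes "adv w \<noteq> []"
  shows "\<exists>c\<in>S. \<exists>i\<le>s. pth c i = w \<and> adv w = hdr i @ chunk c i"
proof -
  have "marked w" using assms unfolding adv_def by (auto split: if_splits)
  then obtain c i where "c \<in> S" "i \<le> s" "pth c i = w" unfolding marked_def by blast
  then show ?thesis using adv_pth by blast
qed

lemma hdr_eq:
  assumes "hdr i @ x = hdr j @ y"
  shows "i mod 3 = j mod 3 \<and> (i = 0 \<longleftrightarrow> j = 0) \<and> x = y"
proof -
  have e: "(i = 0 \<longleftrightarrow> j = 0)" "(i mod 3 = 1 \<longleftrightarrow> j mod 3 = 1)" "(i mod 3 = 2 \<longleftrightarrow> j mod 3 = 2)" "x = y"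
    using assms unfolding hdr_def by simp_all
  have "i mod 3 < 3" "j mod 3 < 3" by simp_all
  then have "i mod 3 = j mod 3" using e(2,3) by linarith
  then show ?thesis using e by simp
qed

lemma center_lemma:
  assumes c: "c \<in> S" and c'V: "c' \<in> V" and eq: "vw deg nb adv s c = vw deg nb adv s c'"
  shows "c' = c"
proof -
  define \<sigma> where "\<sigma> i = take i (cp c)" for i
  have cV: "c \<in> V" using c SV by blast
  have gv: "gvalid deg nb c' (\<sigma> i) \<and> vw deg nb adv (s - i) (pth c i) = vw deg nb adv (s - i) (walk nb c' (\<sigma> i))"
    if "i \<le> s" for i
  proof -
    have p: "gvalid deg nb c (\<sigma> i)" "length (\<sigma> i) = i" using pth_props[OF c that] unfolding \<sigma>_def by auto
    show ?thesis using view_walk[OF eq p(1)] p(2) that unfolding pth_def \<sigma>_def by simp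
  qed
  have advs: "adv (walk nb c' (\<sigma> i)) = hdr i @ chunk c i" if "i \<le> s" for i
    using view_adv[OF conjunct2[OF gv[OF that]]] adv_pth[OF c that] by simp
  have c'S: "c' \<in> S"
  proof -
    have "adv c' = hdr 0 @ chunk c 0" using advs[of 0] unfolding \<sigma>_def by simp
    then have "adv c' \<noteq> []" unfolding hdr_def by simp
    then obtain c2 j where c2: "c2 \<in> S" "j \<le> s" "pth c2 j = c'" "adv c' = hdr j @ chunk c2 j"
      using adv_ne by blast
    have "j = 0" using hdr_eq c2(4) \<open>adv c' = hdr 0 @ chunk c 0\<close> by metis
    then show ?thesis using c2 pth0 by simp
  qed
  have c'V2: "c' \<in> V" using c'V .
  have claim: "i \<le> s \<longrightarrow> walk nb c' (\<sigma> i) = pth c' i" for i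
  proof (induction i)
    case 0 then show ?case unfolding \<sigma>_def using pth0 by simp
  next
    case (Suc i)
    show ?case
    proof
      assume si: "Suc i \<le> s"
      let ?x = "walk nb c' (\<sigma> i)"
      let ?p = "cp c ! i"
      have x: "?x = pth c' i" using Suc.IH si by simp
      have len: "i < length (cp c)" using cpv c si by auto
      have sig: "\<sigma> (Suc i) = \<sigma> i @ [?p]" unfolding \<sigma>_def using len by (simp add: take_Suc_conv_app_nth)
      let ?y = "walk nb c' (\<sigma> (Suc i))"
      have y: "?y = nb ?x ?p" using sig by simp
      have gS: "gvalid deg nb c' (\<sigma> (Suc i))" using gv[OF si] by blast
      then have gp: "gvalid deg nb ?x [?p]" using sig by simp
      have xV: "?x \<in> V" using walk_in[OF c'V] gv si by simp
      have yV: "?y \<in> V" using walk_in[OF c'V gS] .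
      have ay: "adv ?y = hdr (Suc i) @ chunk c (Suc i)" using advs[OF si] .
      then have "adv ?y \<noteq> []" unfolding hdr_def by simp
      then obtain c2 j where c2: "c2 \<in> S" "j \<le> s" "pth c2 j = ?y" "adv ?y = hdr j @ chunk c2 j"
        using adv_ne by blast
      have jm: "j mod 3 = Suc i mod 3" using hdr_eq c2(4) ay by metis
      have d1: "gd c' ?y \<le> Suc i" using dist_le[OF c'V gS] pth_props[OF c si] unfolding \<sigma>_def by simp
      have c2V: "c2 \<in> V" using c2 SV by blast
      have d2: "gd c2 ?y = j" using pth_props[OF c2(1,2)] c2(3) by simp
      have "gd c' c2 \<le> gd c' ?y + gd ?y c2" using dist_tri[OF c'V yV c2V] .
      also have "gd ?y c2 = j" using d2 dist_sym[OF yV c2V] by simp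
      finally have "gd c' c2 \<le> 2*s" using d1 c2(2) si by linarith
      then have c2e: "c2 = c'" using sep c2(1) c'S by (metis not_le)
      then have j: "gd c' ?y = j" using d2 by simp
      have "gd ?x ?y \<le> 1" using dist_le[OF xV gp] y by simp
      then have "gd ?y ?x \<le> 1" using dist_sym[OF xV yV] by simp
      moreover have "gd c' ?x \<le> gd c' ?y + gd ?y ?x" using dist_tri[OF c'V yV xV] .
      moreover have "gd c' ?x = i" using x pth_props[OF c'S, of i] si by simp
      ultimately have "i \<le> j + 1" using j by linarith
      moreover have "j \<le> Suc i" using j d1 by simp
      ultimately have "j = Suc i" using jm by presburger
      then show "?y = pth c' (Suc i)" using c2(3) c2e by simp
    qed
  qed
  have ch: "\<forall>i\<le>s. chunk c' i = chunk c i"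
  proof (intro allI impI)
    fix i assume i: "i \<le> s"
    have "hdr i @ chunk c' i = hdr i @ chunk c i"
      using adv_pth[OF c'S i] advs[OF i] claim[of i] i by simp
    then show "chunk c' i = chunk c i" by simp
  qed
  have "idf c' = idf c"
    using chunks_eq[of "idf c'" s m "idf c"] idlen c'V cV ch unfolding chunk_def by simp
  then show ?thesis using idinj c'V cV by (meson inj_onD)
qed

lemma view_inj: "inj_on (vw deg nb adv K) V"
proof (rule inj_onI)
  fix u u' assume u: "u \<in> V" and u': "u' \<in> V" and eq: "vw deg nb adv K u = vw deg nb adv K u'"
  obtain c where c: "c \<in> S" "gd u c \<le> 2*s" using cover u by blast
  have cV: "c \<in> V" using c SV by blast
  obtain \<pi> where \<pi>: "gvalid deg nb u \<pi>" "walk nb u \<pi> = c" "length \<pi> = gd u c"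
    using dist_walk[OF u cV] by blast
  have l: "length \<pi> \<le> K" using \<pi> c sK by linarith
  have w: "gvalid deg nb u' \<pi>" "vw deg nb adv (K - length \<pi>) c = vw deg nb adv (K - length \<pi>) (walk nb u' \<pi>)"
    using view_walk[OF eq \<pi>(1) l] \<pi>(2) by auto
  have "s \<le> K - length \<pi>" using \<pi> c sK by linarith
  then have "vw deg nb adv s c = vw deg nb adv s (walk nb u' \<pi>)" using view_mono[OF w(2)] by blast
  then have "walk nb u' \<pi> = c" using center_lemma[OF c(1) walk_in[OF u' w(1)]] by simp
  then show "u = u'" using view_rev[OF eq u u' \<pi>(1) l] \<pi>(2) by simp
qed

lemma adv_len: "length (adv w) \<le> 4 + m"
  unfolding adv_def hdr_def chunk_def by auto

end



lemma exL: "n \<ge> 2 \<Longrightarrow> \<exists>L::nat. n \<le> 2^L \<and> real L \<le> 2 * log 2 (real n)"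
proof -
  assume n: "n \<ge> 2"
  define L where "L = nat \<lceil>log 2 (real n)\<rceil>"
  have lg: "log 2 (real n) \<ge> 1" using n by simp
  have L: "real L = real_of_int \<lceil>log 2 (real n)\<rceil>" unfolding L_def using lg by simp
  have "log 2 (real n) \<le> real L" using L by linarith
  then have "real n \<le> 2 powr real L" using n by (subst log_le_iff[symmetric]) auto
  then have "real n \<le> 2 ^ L" by (simp add: powr_realpow)
  then have "n \<le> 2^L" by (metis of_nat_le_iff of_nat_numeral of_nat_power)
  moreover have "real L \<le> 2 * log 2 (real n)" using L lg by linarith
  ultimately show ?thesis by blast
qed

lemma mbound:
  fixes k L :: nat
  assumes k: "0 < k"
  defines "s \<equiv> (k - 1) div 3"
  defines "m \<equiv> (L + s) div Suc s"
  shows "L \<le> Suc s * m" and "m * k \<le> 3 * L + k"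
proof -
  have e: "(L + s) div Suc s * Suc s + (L + s) mod Suc s = L + s" by (rule div_mult_mod_eq)
  have r: "(L + s) mod Suc s \<le> s" using mod_less_divisor[of "Suc s" "L + s"] by simp
  have "L \<le> (L + s) div Suc s * Suc s" using e r by linarith
  then show "L \<le> Suc s * m" unfolding m_def by (metis mult.commute)
  have ms: "m * Suc s \<le> L + s" unfolding m_def using e by linarith
  have ks: "k \<le> 3 * Suc s" "3 * s \<le> k - 1" unfolding s_def using k by auto
  have "m * k \<le> m * (3 * Suc s)" using ks by simp
  also have "\<dots> = 3 * (m * Suc s)" by (simp add: algebra_simps)
  also have "\<dots> \<le> 3 * L + 3 * s" using ms by simp
  also have "\<dots> \<le> 3 * L + k" using ks by simp
  finally show "m * k \<le> 3 * L + k" .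
qed

theorem theorem4p1:
  "\<exists>C::real. C > 0 \<and>
     (\<forall>n D k :: nat. n \<ge> 2 \<longrightarrow> D \<ge> 1 \<longrightarrow> 0 < k \<longrightarrow> k \<le> D \<longrightarrow>
        (\<exists>A :: algorithm.
           \<forall>V deg nb. port_graph V deg nb \<and> pg_connected V deg nb \<and> card V = n \<and>
                      pg_diam V deg nb = D \<longrightarrow>
             (\<exists>adv :: nat \<Rightarrow> bool list.
                (\<forall>v\<in>V. real (length (adv v)) \<le> C * (1 + log 2 (real n) / real k)) \<and>
                solves_ltr_within A V deg nb adv (D + k))))"
proof (intro exI[of _ 6] conjI allI impI)
  show "(0::real) < 6" by simp
  fix n D k :: nat
  assume n: "2 \<le> n" and D: "1 \<le> D" and k: "0 < k" and kD: "k \<le> D"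
  define K where "K = k - 1"
  define s where "s = (k - 1) div 3"
  obtain L where L: "n \<le> 2^L" "real L \<le> 2 * log 2 (real n)" using exL[OF n] by blast
  define m where "m = (L + s) div Suc s"
  have LM: "L \<le> Suc s * m" and mk: "m * k \<le> 3 * L + k"
    using mbound[OF k, of L] unfolding s_def m_def by auto
  have sK: "3 * s \<le> K" unfolding s_def K_def by simp
  have T: "D + k = D + Suc K" unfolding K_def using k by simp
  show "\<exists>A. \<forall>V deg nb. port_graph V deg nb \<and> pg_connected V deg nb \<and> card V = n \<and>
                      pg_diam V deg nb = D \<longrightarrow>
             (\<exists>adv. (\<forall>v\<in>V. real (length (adv v)) \<le> 6 * (1 + log 2 (real n) / real k)) \<and>
                solves_ltr_within A V deg nb adv (D + k))"
  proof (intro exI[of _ "alg (D + k) D K"] allI impI)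
    fix V deg nb
    assume G: "port_graph V deg nb \<and> pg_connected V deg nb \<and> card V = n \<and> pg_diam V deg nb = D"
    interpret pgr V deg nb using G by unfold_locales auto
    have cardV: "card V = n" and diam: "pg_diam V deg nb = D" using G by auto
    have Vne: "V \<noteq> {}" using cardV n by auto
    obtain S where S: "S \<subseteq> V" "\<forall>a\<in>S. \<forall>b\<in>S. a \<noteq> b \<longrightarrow> 2*s < gd a b" "\<forall>u\<in>V. \<exists>c\<in>S. gd u c \<le> 2*s"
      using centers_exist[of s] by blast
    obtain a b where ab: "a \<in> V" "b \<in> V" "gd a b = D" using diam_att[OF Vne] diam by blast
    have "\<exists>ps. gvalid deg nb c ps \<and> s \<le> length ps \<and> (\<forall>i\<le>s. gd c (walk nb c (take i ps)) = i)"
      if c: "c \<in> S" for c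
    proof -
      have cV: "c \<in> V" using c S by blast
      have "gd a b \<le> gd a c + gd c b" using dist_tri[OF ab(1) cV ab(2)] .
      moreover have "gd a c = gd c a" using dist_sym[OF ab(1) cV] .
      moreover have "2 * s \<le> D" unfolding s_def using kD by linarith
      ultimately have "s \<le> gd c a \<or> s \<le> gd c b" using ab(3) by linarith
      then obtain w where w: "w \<in> V" "s \<le> gd c w" using ab by blast
      obtain ps where ps: "gvalid deg nb c ps" "length ps = gd c w"
        "\<forall>i\<le>length ps. gd c (walk nb c (take i ps)) = i" using geodesic[OF cV w(1)] by blast
      then show ?thesis using w(2) by (intro exI[of _ ps]) auto
    qed
    then have "\<forall>c\<in>S. \<exists>ps. gvalid deg nb c ps \<and> s \<le> length ps \<and> (\<forall>i\<le>s. gd c (walk nb c (take i ps)) = i)"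
      by blast
    then obtain cp where cp: "\<forall>c\<in>S. gvalid deg nb c (cp c) \<and> s \<le> length (cp c) \<and>
        (\<forall>i\<le>s. gd c (walk nb c (take i (cp c))) = i)" by (rule bchoice[THEN exE])
    let ?B = "{xs :: bool list. set xs \<subseteq> UNIV \<and> length xs = Suc s * m}"
    have "card V \<le> card ?B"
    proof -
      have "card ?B = card (UNIV::bool set) ^ (Suc s * m)" by (rule card_lists_length_eq) simp
      then have "card ?B = 2 ^ (Suc s * m)" by (simp only: card_UNIV_bool)
      moreover have p: "(2::nat) ^ L \<le> 2 ^ (Suc s * m)" by (rule power_increasing[OF LM]) simp
      ultimately show ?thesis using cardV L(1) by linarith
    qed
    moreover have "finite ?B" by (rule finite_lists_length_eq) simp
    ultimately obtain idf where idf: "idf ` V \<subseteq> ?B" "inj_on idf V"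
      using card_le_inj[OF finV] by blast
    have idlen: "\<forall>u\<in>V. length (idf u) = Suc s * m" using idf(1) by blast
    interpret sc: scheme V deg nb s K m S cp idf
      using sK S cp idf(2) idlen by unfold_locales auto
    show "\<exists>adv. (\<forall>v\<in>V. real (length (adv v)) \<le> 6 * (1 + log 2 (real n) / real k)) \<and>
                solves_ltr_within (alg (D + k) D K) V deg nb adv (D + k)"
    proof (intro exI[of _ sc.adv] conjI)
      show "\<forall>v\<in>V. real (length (sc.adv v)) \<le> 6 * (1 + log 2 (real n) / real k)"
      proof
        fix v assume "v \<in> V"
        have l: "real (length (sc.adv v)) \<le> 4 + real m" using sc.adv_len[of v] by simp
        have kr: "real k > 0" using k by simp
        have "real m * real k \<le> 3 * real L + real k" using mk by (metis of_nat_add of_nat_le_iff of_nat_mult of_nat_numeral)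
        then have "real m \<le> (3 * real L + real k) / real k" using kr by (simp add: field_simps)
        also have "\<dots> = 3 * real L / real k + 1" using kr by (simp add: field_simps)
        also have "\<dots> \<le> 6 * log 2 (real n) / real k + 1"
          using L(2) kr by (simp add: divide_right_mono)
        finally have "real m \<le> 6 * log 2 (real n) / real k + 1" .
        then show "real (length (sc.adv v)) \<le> 6 * (1 + log 2 (real n) / real k)" using l by simp
      qed
      have inj: "inj_on (vw deg nb sc.adv K) V" by (rule sc.view_inj)
      have P1: "\<forall>v\<in>V. \<exists>t\<le>D + k. outp (alg (D + k) D K) (run (alg (D + k) D K) deg nb sc.adv t v) \<noteq> None"
        using outp_alg by blast
      have P2: "\<forall>v\<in>V. pg_same (fst (final_out (alg (D + k) D K) deg nb sc.adv v)) (H0 sc.adv K)"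
        using decode_ok(1)[OF inj _ T] diam by (simp add: final_out_alg)
      have P3: "pg_iso V deg nb (H0 sc.adv K) (vw deg nb sc.adv K)" using H0_iso[OF inj] .
      have P4: "\<forall>v\<in>V. vw deg nb sc.adv K v = snd (final_out (alg (D + k) D K) deg nb sc.adv v)"
        using decode_ok(2)[OF inj _ T] diam by (simp add: final_out_alg)
      show "solves_ltr_within (alg (D + k) D K) V deg nb sc.adv (D + k)"
        unfolding solves_ltr_within_def using P1 P2 P3 P4 by blast
    qed
  qed
qed


end
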